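(* Run the main loop of $c$-Adaptive ShiversSort on a sequence of positive run lengths $q_1,\dots,q_\rho$ with $\sum_i q_i=n$. Let $m$ be the total length of all merged runs created during the main loop. Then $\sum (r_1+r_2)\le 2(n+m)$, where the sum is over all failed checks and $r_1,r_2$ are the lengths of the top two stack entries at the time of that check. In particular, $\sum 2\max\{r_1,r_2\}\le 4(n+m)$ over the same failed checks.
   Context: Fix $c>0$. The main loop of $c$-Adaptive ShiversSort maintains a stack $S$ of run lengths. The top entry is called $R_1$ with length $r_1$, the next $R_2$ with length $r_2$, and so on. For $t=1,\dots,\rho$ it does the following. It pushes a new run of length $q_t$. Then, while $|S|\ge3$ and $\ell_3\le\max\{\ell_1,\ell_2\}$, where $\ell_i=\lfloor\log_2(r_i/c)\rfloor$, it replaces $R_3$ and $R_2$ by a single new run of length $r_3+r_2$, occupying the second position. Each such newly created run is a merged run. A failed check is an evaluation of the while-condition with $|S|\ge3$ that evaluates to false. *)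

theory Defs
  imports Complex_Main
begin

text \<open>Stack of run lengths as a list; the head is the top entry R_1.\<close>

definition lvl :: "real \<Rightarrow> nat \<Rightarrow> int" where
  "lvl c r = \<lfloor>log 2 (real r / c)\<rfloor>"

text \<open>Returns the final stack, the list of
lengths of merged runs created, and the list of pairs (r1, r2) recorded at
each failed check (an evaluation of the condition with at least 3 entries
that evaluates to false).\<close>

function collapse :: "real \<Rightarrow> nat list \<Rightarrow> nat list \<times> nat list \<times> (nat \<times> nat) list" where
  "collapse c (r1 # r2 # r3 # rest) =
     (if lvl c r3 \<le> max (lvl c r1) (lvl c r2)
      then (case collapse c (r1 # (r3 + r2) # rest) of
              (S', ms, fs) \<Rightarrow> (S', (r3 + r2) # ms, fs))
      else (r1 # r2 # r3 # rest, [], [(r1, r2)]))"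
| "collapse c [] = ([], [], [])"
| "collapse c [r1] = ([r1], [], [])"
| "collapse c [r1, r2] = ([r1, r2], [], [])"
  by pat_completeness auto
termination
  by (relation "measure (\<lambda>(c, S). length S)") auto

fun main_loop :: "real \<Rightarrow> nat list \<Rightarrow> nat list \<Rightarrow> nat list \<times> nat list \<times> (nat \<times> nat) list" where
  "main_loop c S [] = (S, [], [])"
| "main_loop c S (q # qs) =
     (case collapse c (q # S) of
        (S1, ms1, fs1) \<Rightarrow>
          (case main_loop c S1 qs of
             (S2, ms2, fs2) \<Rightarrow> (S2, ms1 @ ms2, fs1 @ fs2)))"

end

theory Submission
  imports Defs
begin

lemma collapse_bound:
  "collapse c S = (S', ms, fs) \<Longrightarrow>
     (\<Sum>(r1, r2)\<leftarrow>fs. r1 + r2) \<le> sum_list (take 2 S) + sum_list ms \<and> take 1 S' = take 1 S"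
proof (induction c S arbitrary: S' ms fs rule: collapse.induct)
  case (1 c r1 r2 r3 rest)
  show ?case
  proof (cases "lvl c r3 \<le> max (lvl c r1) (lvl c r2)")
    case True
    obtain A B C where e: "collapse c (r1 # (r3 + r2) # rest) = (A, B, C)"
      by (metis prod_cases3)
    with 1(2) True have "S' = A" "ms = (r3 + r2) # B" "fs = C" by auto
    with 1(1)[OF True e] show ?thesis by auto
  next
    case False
    with 1(2) show ?thesis by auto
  qed
qed auto

lemma main_bound:
  "main_loop c S qs = (S2, ms, fs) \<Longrightarrow>
     (\<Sum>(r1, r2)\<leftarrow>fs. r1 + r2) \<le> sum_list (take 1 S) + 2 * sum_list qs + sum_list ms"
proof (induction qs arbitrary: S S2 ms fs)
  case Nil
  then show ?case by auto
next
  case (Cons q qs)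
  obtain S1 ms1 fs1 where e1: "collapse c (q # S) = (S1, ms1, fs1)"
    by (metis prod_cases3)
  obtain A B C where e2: "main_loop c S1 qs = (A, B, C)"
    by (metis prod_cases3)
  from Cons.prems e1 e2 have m: "ms = ms1 @ B" "fs = fs1 @ C" by auto
  from collapse_bound[OF e1] have b1:
    "(\<Sum>(r1, r2)\<leftarrow>fs1. r1 + r2) \<le> sum_list (take 2 (q # S)) + sum_list ms1"
    and h: "take 1 S1 = [q]" by auto
  from Cons.IH[OF e2] h have b2:
    "(\<Sum>(r1, r2)\<leftarrow>C. r1 + r2) \<le> q + 2 * sum_list qs + sum_list B" by simp
  have t: "sum_list (take 2 (q # S)) = q + sum_list (take 1 S)"
    by (cases S) auto
  show ?case using b1 b2 t m by simp
qed

lemma max_sum: "(\<Sum>(r1, r2)\<leftarrow>fs. 2 * max r1 r2) \<le> 2 * (\<Sum>(r1, r2)\<leftarrow>(fs::(nat\<times>nat) list). r1 + r2)"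
  by (induction fs) auto

theorem mainTheorem9:
  fixes c :: real and qs :: "nat list" and n :: nat
  assumes "c > 0"
    and "\<forall>q\<in>set qs. q > 0"
    and "n = sum_list qs"
  shows "(case main_loop c [] qs of (S, ms, fs) \<Rightarrow>
            (\<Sum>(r1, r2)\<leftarrow>fs. r1 + r2) \<le> 2 * (n + sum_list ms) \<and>
            (\<Sum>(r1, r2)\<leftarrow>fs. 2 * max r1 r2) \<le> 4 * (n + sum_list ms))"
proof -
  obtain S ms fs where e: "main_loop c [] qs = (S, ms, fs)" by (metis prod_cases3)
  from main_bound[OF e] have b: "(\<Sum>(r1, r2)\<leftarrow>fs. r1 + r2) \<le> 2 * (n + sum_list ms)"
    using assms(3) by simp
  moreover have "(\<Sum>(r1, r2)\<leftarrow>fs. 2 * max r1 r2) \<le> 4 * (n + sum_list ms)"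
    using max_sum[of fs] b by linarith
  ultimately show ?thesis using e by simp
qed

end
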